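(* Let $\Gamma$ be a mandarin graph with $N$ edges and let $\mathbf{z}\in\Sigma(\Gamma)$. Define $\mathcal{T}_{\mathbf{z},\mathrm{s}}(\Gamma)=\{\mathbf{x}\in\mathcal{T}_{\mathbf{z}}(\Gamma):(A_j,B_j)=(C_j,D_j)\text{ for all }j\}$ and $\mathcal{T}_{\mathbf{z},\mathrm{as}}(\Gamma)=\{\mathbf{x}\in\mathcal{T}_{\mathbf{z}}(\Gamma):(A_j,B_j)=-(C_j,D_j)\text{ for all }j\}$. Then $\mathcal{T}_{\mathbf{z}}(\Gamma)=\mathcal{T}_{\mathbf{z},\mathrm{s}}(\Gamma)\oplus\mathcal{T}_{\mathbf{z},\mathrm{as}}(\Gamma)$, and $\mathcal{T}_{\mathbf{z},\mathrm{s}}(\Gamma)\ne\{0\}\iff P_{M,\mathrm{s}}(\mathbf{z})=0$, $\mathcal{T}_{\mathbf{z},\mathrm{as}}(\Gamma)\ne\{0\}\iff P_{M,\mathrm{as}}(\mathbf{z})=0$, where $P_{M,\mathrm{s}}(\mathbf{z})=\sum_{j=1}^N(z_j-1)\prod_{i\ne j}(z_i+1)$ and $P_{M,\mathrm{as}}(\mathbf{z})=\sum_{j=1}^N(z_j+1)\prod_{i\ne j}(z_i-1)$.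
   Context: A mandarin graph has exactly two vertices and $N$ edges $e_1,\dots,e_N$ each joining them; each edge is oriented. For $\boldsymbol{\ell}\in\mathbb{R}_+^N$, $(\Gamma,\boldsymbol{\ell})$ has $e_j\cong[0,\ell_j]$ and the Laplacian $-d^2/dt^2$ edgewise with standard vertex conditions (continuity, zero sum of outgoing derivatives at each vertex). For an eigenpair $(k^2,f)$, $k>0$: $f|_{e_j}(t)=A_j\cos(kt)+B_j\sin(kt)=C_j\cos(k(\ell_j-t))+D_j\sin(k(\ell_j-t))$, and $\mathrm{tr}_k(f)\in\mathbb{C}^{4N}$ is the vector of all $(A_j,B_j,C_j,D_j)$; for $k=0$ (constant $c$), $A_j=C_j=c$, $B_j=D_j=0$. Trace space $\mathcal{T}(\Gamma)=\{(\exp(ik\boldsymbol{\ell}),\mathrm{tr}_k(f))\}$ over all $\boldsymbol{\ell}$, eigenvalues $k^2$, and $f$ in the eigenspace (including $0$), where $\exp(ik\boldsymbol{\ell})=(e^{ik\ell_j})_j\in\mathbb{T}^N$; $\Sigma(\Gamma)$ is the projection to $\mathbb{T}^N$ and $\mathcal{T}_{\mathbf{z}}(\Gamma)=\{\mathbf{x}:(\mathbf{z},\mathbf{x})\in\mathcal{T}(\Gamma)\}$. *)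

theory Defs
  imports "HOL-Analysis.Analysis"
begin

text \<open>Mandarin graph with edge set indexed by a finite type 'n (so N = CARD('n)).
  Two vertices u, v; every edge e_j is oriented from u (t = 0) to v (t = l_j).
  A function on the metric graph is a family f j of complex functions, f j living
  on [0, l_j].\<close>

definition eig_fun :: "real^'n \<Rightarrow> real \<Rightarrow> ('n::finite \<Rightarrow> real \<Rightarrow> complex) \<Rightarrow> bool" where
  "eig_fun l lam f \<longleftrightarrow>
     (\<exists>f' f''. (\<forall>j. \<forall>t\<in>{0..l$j}.
         (f j has_vector_derivative f' j t) (at t within {0..l$j}) \<and>
         (f' j has_vector_derivative f'' j t) (at t within {0..l$j}) \<and>
         - f'' j t = of_real lam * f j t)
      \<and> (\<forall>i j. f i 0 = f j 0)
      \<and> (\<forall>i j. f i (l$i) = f j (l$j))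
      \<and> (\<Sum>j\<in>UNIV. f' j 0) = 0
      \<and> (\<Sum>j\<in>UNIV. - f' j (l$j)) = 0)"

definition is_eigenvalue :: "real^'n::finite \<Rightarrow> real \<Rightarrow> bool" where
  "is_eigenvalue l lam \<longleftrightarrow>
     (\<exists>f. eig_fun l lam f \<and> (\<exists>j. \<exists>t\<in>{0..l$j}. f j t \<noteq> 0))"

definition trA :: "complex^('n::finite \<times> 4) \<Rightarrow> 'n \<Rightarrow> complex" where "trA x j = x $ (j, 0)"
definition trB :: "complex^('n::finite \<times> 4) \<Rightarrow> 'n \<Rightarrow> complex" where "trB x j = x $ (j, 1)"
definition trC :: "complex^('n::finite \<times> 4) \<Rightarrow> 'n \<Rightarrow> complex" where "trC x j = x $ (j, 2)"
definition trD :: "complex^('n::finite \<times> 4) \<Rightarrow> 'n \<Rightarrow> complex" where "trD x j = x $ (j, 3)"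

definition is_trace :: "real^'n::finite \<Rightarrow> real \<Rightarrow> ('n \<Rightarrow> real \<Rightarrow> complex) \<Rightarrow> complex^('n \<times> 4) \<Rightarrow> bool" where
  "is_trace l k f x \<longleftrightarrow>
     (k > 0 \<longrightarrow> (\<forall>j. \<forall>t\<in>{0..l$j}.
        f j t = trA x j * of_real (cos (k * t)) + trB x j * of_real (sin (k * t)) \<and>
        f j t = trC x j * of_real (cos (k * (l$j - t))) + trD x j * of_real (sin (k * (l$j - t)))))
   \<and> (k = 0 \<longrightarrow> (\<exists>c. (\<forall>j. \<forall>t\<in>{0..l$j}. f j t = c) \<and>
        (\<forall>j. trA x j = c \<and> trB x j = 0 \<and> trC x j = c \<and> trD x j = 0)))"

definition trace_space :: "((complex^'n::finite) \<times> (complex^('n \<times> 4))) set" where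
  "trace_space = {(z, x). \<exists>l k f. (\<forall>j. l$j > 0) \<and> k \<ge> 0 \<and>
       is_eigenvalue l (k\<^sup>2) \<and> eig_fun l (k\<^sup>2) f \<and>
       z = (\<chi> j. exp (\<i> * of_real (k * l$j))) \<and> is_trace l k f x}"

definition Sigma_set :: "(complex^'n::finite) set" where
  "Sigma_set = fst ` (trace_space :: ((complex^'n) \<times> (complex^('n \<times> 4))) set)"

definition trace_fiber :: "complex^'n::finite \<Rightarrow> (complex^('n \<times> 4)) set" where
  "trace_fiber z = {x. (z, x) \<in> trace_space}"

definition trace_fiber_s :: "complex^'n::finite \<Rightarrow> (complex^('n \<times> 4)) set" where
  "trace_fiber_s z = {x \<in> trace_fiber z. \<forall>j. trA x j = trC x j \<and> trB x j = trD x j}"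

definition trace_fiber_as :: "complex^'n::finite \<Rightarrow> (complex^('n \<times> 4)) set" where
  "trace_fiber_as z = {x \<in> trace_fiber z. \<forall>j. trA x j = - trC x j \<and> trB x j = - trD x j}"

definition P_s :: "complex^'n::finite \<Rightarrow> complex" where
  "P_s z = (\<Sum>j\<in>UNIV. (z$j - 1) * (\<Prod>i\<in>UNIV - {j}. z$i + 1))"

definition P_as :: "complex^'n::finite \<Rightarrow> complex" where
  "P_as z = (\<Sum>j\<in>UNIV. (z$j + 1) * (\<Prod>i\<in>UNIV - {j}. z$i - 1))"

end

theory Submission
  imports Defs
begin

definition mkx :: "('n::finite \<Rightarrow> complex) \<Rightarrow> ('n \<Rightarrow> complex) \<Rightarrow> ('n \<Rightarrow> complex) \<Rightarrow> ('n \<Rightarrow> complex) \<Rightarrow> complex^('n \<times> 4)" where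
  "mkx A B C D = (\<chi> p. if snd p = 0 then A (fst p) else if snd p = 1 then B (fst p)
      else if snd p = 2 then C (fst p) else D (fst p))"

lemma tr_mkx[simp]:
  "trA (mkx A B C D) j = A j" "trB (mkx A B C D) j = B j"
  "trC (mkx A B C D) j = C j" "trD (mkx A B C D) j = D j"
  by (simp_all add: mkx_def trA_def trB_def trC_def trD_def)

lemma tr_mkx_fun:
  "trA (mkx A B C D) = A" "trB (mkx A B C D) = B" "trC (mkx A B C D) = C" "trD (mkx A B C D) = D"
  by (rule ext, simp)+

lemma tr_ops[simp]:
  "trA (x + y) j = trA x j + trA y j" "trB (x + y) j = trB x j + trB y j"
  "trC (x + y) j = trC x j + trC y j" "trD (x + y) j = trD x j + trD y j"
  "trA (c *s x) j = c * trA x j" "trB (c *s x) j = c * trB x j"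
  "trC (c *s x) j = c * trC x j" "trD (c *s x) j = c * trD x j"
  "trA 0 j = 0" "trB 0 j = 0" "trC 0 j = 0" "trD 0 j = 0"
  by (simp_all add: trA_def trB_def trC_def trD_def)

lemma tr_ext: "x = y \<longleftrightarrow> (\<forall>j. trA x j = trA y j \<and> trB x j = trB y j \<and> trC x j = trC y j \<and> trD x j = trD y j)"
proof
  assume h: "\<forall>j. trA x j = trA y j \<and> trB x j = trB y j \<and> trC x j = trC y j \<and> trD x j = trD y j"
  show "x = y" unfolding vec_eq_iff
  proof
    fix p :: "'a \<times> 4"
    obtain j r where p: "p = (j, r)" by (cases p)
    have f4: "(4::4) = 0" by simp
    have "r = 1 \<or> r = 2 \<or> r = 3 \<or> r = 0" using exhaust_4[of r] unfolding f4 .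
    then show "x $ p = y $ p" using h[rule_format, of j] p
      by (auto simp: trA_def trB_def trC_def trD_def)
  qed
qed simp

lemma dcs: "((\<lambda>t. A * complex_of_real (cos (k * t)) + B * complex_of_real (sin (k * t))) has_vector_derivative
   (A * of_real (-(k * sin(k * t))) + B * of_real (k * cos(k * t)))) (at t within S)"
  by (auto intro!: derivative_eq_intros simp: algebra_simps)

lemma dcs2: "((\<lambda>t. C * complex_of_real (cos (k * (L - t))) + D * complex_of_real (sin (k * (L - t)))) has_vector_derivative
   (C * of_real (k * sin(k * (L - t))) - D * of_real (k * cos(k * (L - t))))) (at t within S)"
  by (auto intro!: derivative_eq_intros simp: algebra_simps)

lemma re_e[simp]: "Re (exp (\<i> * complex_of_real th)) = cos th" "Im (exp (\<i> * complex_of_real th)) = sin th"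
  by (simp_all add: Re_exp Im_exp)

lemma re_e2[simp]: "Re (exp (\<i> * (complex_of_real a * complex_of_real b))) = cos (a * b)"
   "Im (exp (\<i> * (complex_of_real a * complex_of_real b))) = sin (a * b)"
  using re_e[of "a * b"] by simp_all

lemma cm_e: "cmod (exp (\<i> * complex_of_real th)) = 1"
  by simp

definition Vz :: "complex^'n::finite \<Rightarrow> (complex^('n \<times> 4)) set" where
"Vz z = {x. (\<forall>i j. trA x i = trA x j) \<and> (\<forall>i j. trC x i = trC x j) \<and> (\<Sum>j\<in>UNIV. trB x j) = 0
   \<and> (\<Sum>j\<in>UNIV. trD x j) = 0 \<and> (\<forall>j. trC x j = of_real (Re (z$j)) * trA x j + of_real (Im (z$j)) * trB x j
   \<and> trD x j = of_real (Im (z$j)) * trA x j - of_real (Re (z$j)) * trB x j)}"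

lemma rot:
  fixes A B :: complex and c s u v :: real
  assumes "c\<^sup>2 + s\<^sup>2 = 1"
  shows "A * of_real u + B * of_real v = (of_real c * A + of_real s * B) * of_real (c * u + s * v)
     + (of_real s * A - of_real c * B) * of_real (s * u - c * v)"
proof -
  have "(of_real c * A + of_real s * B) * of_real (c * u + s * v)
     + (of_real s * A - of_real c * B) * of_real (s * u - c * v) = of_real (c\<^sup>2 + s\<^sup>2) * (A * of_real u + B * of_real v)"
    by (simp add: algebra_simps power2_eq_square)
  then show ?thesis using assms by simp
qed

lemma uniq: "0 < L \<Longrightarrow> t \<in> {0..L} \<Longrightarrow> (g has_vector_derivative a) (at t within {0..L})
   \<Longrightarrow> (g has_vector_derivative b) (at t within {0..L}) \<Longrightarrow> a = b"
  using vector_derivative_unique_within_closed_interval[of 0 L t g a b] by simp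

lemma L3:
  fixes l :: "real^'n::finite"
  assumes k: "k > 0" and x: "x \<in> Vz (\<chi> j. exp (\<i> * of_real (k * l$j)))"
  shows "eig_fun l (k\<^sup>2) (\<lambda>j t. trA x j * of_real (cos (k * t)) + trB x j * of_real (sin (k * t)))"
    and "is_trace l k (\<lambda>j t. trA x j * of_real (cos (k * t)) + trB x j * of_real (sin (k * t))) x"
proof -
  have hA: "\<And>i j. trA x i = trA x j" and hC: "\<And>i j. trC x i = trC x j"
    and hB: "(\<Sum>j\<in>UNIV. trB x j) = 0" and hD: "(\<Sum>j\<in>UNIV. trD x j) = 0"
    and hCj: "\<And>j. trC x j = of_real (cos (k * l$j)) * trA x j + of_real (sin (k * l$j)) * trB x j"
    and hDj: "\<And>j. trD x j = of_real (sin (k * l$j)) * trA x j - of_real (cos (k * l$j)) * trB x j"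
    using x unfolding Vz_def by auto
  show "eig_fun l (k\<^sup>2) (\<lambda>j t. trA x j * of_real (cos (k * t)) + trB x j * of_real (sin (k * t)))"
    unfolding eig_fun_def
  proof (rule exI[of _ "\<lambda>j t. trA x j * of_real (-(k * sin (k * t))) + trB x j * of_real (k * cos (k * t))"],
      rule exI[of _ "\<lambda>j t. trA x j * of_real (-(k * (k * cos (k * t)))) + trB x j * of_real (-(k * (k * sin (k * t))))"], intro conjI allI ballI)
    fix j t
    show "((\<lambda>t. trA x j * of_real (cos (k * t)) + trB x j * of_real (sin (k * t))) has_vector_derivative
      trA x j * of_real (-(k * sin (k * t))) + trB x j * of_real (k * cos (k * t))) (at t within {0..l$j})"
      by (rule dcs)
    show "((\<lambda>t. trA x j * of_real (-(k * sin (k * t))) + trB x j * of_real (k * cos (k * t))) has_vector_derivative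
      trA x j * of_real (-(k * (k * cos (k * t)))) + trB x j * of_real (-(k * (k * sin (k * t))))) (at t within {0..l$j})"
      by (auto intro!: derivative_eq_intros simp: algebra_simps)
    show "- (trA x j * of_real (-(k * (k * cos (k * t)))) + trB x j * of_real (-(k * (k * sin (k * t)))))
       = of_real (k\<^sup>2) * (trA x j * of_real (cos (k * t)) + trB x j * of_real (sin (k * t)))"
      by (simp add: algebra_simps power2_eq_square)
  next
    fix i j
    show "trA x i * of_real (cos (k * 0)) + trB x i * of_real (sin (k * 0)) =
          trA x j * of_real (cos (k * 0)) + trB x j * of_real (sin (k * 0))"
      using hA by simp
    show "trA x i * of_real (cos (k * l$i)) + trB x i * of_real (sin (k * l$i)) =
          trA x j * of_real (cos (k * l$j)) + trB x j * of_real (sin (k * l$j))"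
      using hC[of i j] hCj[of i] hCj[of j] by (simp add: mult.commute)
  next
    show "(\<Sum>j\<in>UNIV. trA x j * of_real (-(k * sin (k * 0))) + trB x j * of_real (k * cos (k * 0))) = 0"
      using hB by (simp add: sum_distrib_right[symmetric])
    have "\<And>j. - (trA x j * of_real (-(k * sin (k * l$j))) + trB x j * of_real (k * cos (k * l$j)))
       = trD x j * of_real k"
      by (subst hDj) (simp add: algebra_simps)
    then show "(\<Sum>j\<in>UNIV. - (trA x j * of_real (-(k * sin (k * l$j))) + trB x j * of_real (k * cos (k * l$j)))) = 0"
      using hD by (simp add: sum_distrib_right[symmetric])
  qed
  show "is_trace l k (\<lambda>j t. trA x j * of_real (cos (k * t)) + trB x j * of_real (sin (k * t))) x"
    unfolding is_trace_def
  proof (intro conjI impI allI ballI)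
    fix j t
    show "trA x j * of_real (cos (k * t)) + trB x j * of_real (sin (k * t)) =
      trA x j * of_real (cos (k * t)) + trB x j * of_real (sin (k * t))" by simp
    have c1: "cos (k * (l$j - t)) = cos (k * l$j) * cos (k * t) + sin (k * l$j) * sin (k * t)"
      by (simp add: right_diff_distrib cos_diff)
    have s1: "sin (k * (l$j - t)) = sin (k * l$j) * cos (k * t) - cos (k * l$j) * sin (k * t)"
      by (simp add: right_diff_distrib sin_diff)
    show "trA x j * of_real (cos (k * t)) + trB x j * of_real (sin (k * t)) =
      trC x j * of_real (cos (k * (l$j - t))) + trD x j * of_real (sin (k * (l$j - t)))"
      unfolding c1 s1 hCj hDj by (rule rot) simp
  qed (use k in auto)
qed


lemma L1:
  fixes l :: "real^'n::finite"
  assumes k: "k > 0" and l: "\<forall>j. l$j > 0" and ef: "eig_fun l (k\<^sup>2) f" and tr: "is_trace l k f x"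
  shows "x \<in> Vz (\<chi> j. exp (\<i> * of_real (k * l$j)))"
proof -
  obtain f' f'' where d: "\<forall>j. \<forall>t\<in>{0..l$j}. (f j has_vector_derivative f' j t) (at t within {0..l$j})"
    and c0: "\<forall>i j. f i 0 = f j 0" and cl: "\<forall>i j. f i (l$i) = f j (l$j)"
    and s0: "(\<Sum>j\<in>UNIV. f' j 0) = 0" and sl: "(\<Sum>j\<in>UNIV. - f' j (l$j)) = 0"
    using ef unfolding eig_fun_def by blast
  have rep: "\<forall>j. \<forall>t\<in>{0..l$j}.
        f j t = trA x j * of_real (cos (k * t)) + trB x j * of_real (sin (k * t)) \<and>
        f j t = trC x j * of_real (cos (k * (l$j - t))) + trD x j * of_real (sin (k * (l$j - t)))"
    using tr k unfolding is_trace_def by blast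
  have pj: "trA x j = f j 0 \<and> trC x j = f j (l$j) \<and> f' j 0 = trB x j * of_real k \<and>
     f' j (l$j) = - (trD x j * of_real k) \<and>
     trC x j = of_real (cos (k * l$j)) * trA x j + of_real (sin (k * l$j)) * trB x j \<and>
     trD x j = of_real (sin (k * l$j)) * trA x j - of_real (cos (k * l$j)) * trB x j" for j
  proof -
    define L where "L = l$j"
    have L: "0 < L" using l L_def by auto
    have m0: "0 \<in> {0..L}" and mL: "L \<in> {0..L}" using L by auto
    have r1: "\<And>t. t \<in> {0..L} \<Longrightarrow> f j t = trA x j * of_real (cos (k * t)) + trB x j * of_real (sin (k * t))"
      using rep unfolding L_def by blast
    have r2: "\<And>t. t \<in> {0..L} \<Longrightarrow> f j t = trC x j * of_real (cos (k * (L - t))) + trD x j * of_real (sin (k * (L - t)))"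
      using rep unfolding L_def by blast
    have dj: "\<And>t. t \<in> {0..L} \<Longrightarrow> (f j has_vector_derivative f' j t) (at t within {0..L})"
      using d L_def by auto
    have e0: "f j 0 = trA x j" using r1[OF m0] by simp
    have e0': "f j 0 = trC x j * of_real (cos (k * L)) + trD x j * of_real (sin (k * L))" using r2[OF m0] by simp
    have eL: "f j L = trA x j * of_real (cos (k * L)) + trB x j * of_real (sin (k * L))" using r1[OF mL] by simp
    have eL': "f j L = trC x j" using r2[OF mL] by simp
    have g1: "\<And>t. t \<in> {0..L} \<Longrightarrow> (f j has_vector_derivative
       (trA x j * of_real (-(k * sin(k * t))) + trB x j * of_real (k * cos(k * t)))) (at t within {0..L})"
      by (rule has_vector_derivative_transform[OF _ _ dcs]) (auto simp: r1)
    have g2: "\<And>t. t \<in> {0..L} \<Longrightarrow> (f j has_vector_derivative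
       (trC x j * of_real (k * sin(k * (L - t))) - trD x j * of_real (k * cos(k * (L - t))))) (at t within {0..L})"
      by (rule has_vector_derivative_transform[OF _ _ dcs2]) (auto simp: r2)
    have d0: "f' j 0 = trB x j * of_real k" using uniq[OF L m0 dj[OF m0] g1[OF m0]] by simp
    have d0': "f' j 0 = trC x j * of_real (k * sin(k * L)) - trD x j * of_real (k * cos(k * L))"
      using uniq[OF L m0 dj[OF m0] g2[OF m0]] by simp
    have dL: "f' j L = - (trD x j * of_real k)" using uniq[OF L mL dj[OF mL] g2[OF mL]] by simp
    have kB: "trB x j = trC x j * of_real (sin(k * L)) - trD x j * of_real (cos(k * L))"
    proof -
      have "of_real k * trB x j = of_real k * (trC x j * of_real (sin(k * L)) - trD x j * of_real (cos(k * L)))"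
        using d0 d0' by (simp add: algebra_simps)
      then show ?thesis using k by simp
    qed
    have sc: "complex_of_real (sin (k * L)) ^ 2 + complex_of_real (cos (k * L)) ^ 2 = 1"
      by (metis of_real_add of_real_1 of_real_power sin_cos_squared_add)
    have hD: "trD x j = of_real (sin (k * L)) * trA x j - of_real (cos (k * L)) * trB x j"
    proof -
      have "of_real (sin (k * L)) * trA x j - of_real (cos (k * L)) * trB x j
        = (complex_of_real (sin (k * L)) ^ 2 + complex_of_real (cos (k * L)) ^ 2) * trD x j"
        unfolding kB e0[symmetric] e0' by (simp add: algebra_simps power2_eq_square)
      then show ?thesis using sc by simp
    qed
    show ?thesis using e0 eL eL' d0 dL hD L_def by (simp add: mult.commute)
  qed
  show ?thesis unfolding Vz_def
  proof (intro CollectI conjI allI)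
    fix i j
    show "trA x i = trA x j" using pj[of i] pj[of j] c0 by metis
    show "trC x i = trC x j" using pj[of i] pj[of j] cl by metis
  next
    show "(\<Sum>j\<in>UNIV. trB x j) = 0"
    proof -
      have "(\<Sum>j\<in>UNIV. trB x j) * of_real k = 0" using s0 pj by (simp add: sum_distrib_right)
      then show ?thesis using k by simp
    qed
    show "(\<Sum>j\<in>UNIV. trD x j) = 0"
    proof -
      have "(\<Sum>j\<in>UNIV. trD x j) * of_real k = 0" using sl pj by (simp add: sum_distrib_right)
      then show ?thesis using k by simp
    qed
  next
    fix j
    show "trC x j = of_real (Re ((\<chi> j. exp (\<i> * of_real (k * l$j))) $ j)) * trA x j
       + of_real (Im ((\<chi> j. exp (\<i> * of_real (k * l$j))) $ j)) * trB x j"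
      using pj[of j] unfolding vec_lambda_beta re_e by blast
    show "trD x j = of_real (Im ((\<chi> j. exp (\<i> * of_real (k * l$j))) $ j)) * trA x j
       - of_real (Re ((\<chi> j. exp (\<i> * of_real (k * l$j))) $ j)) * trB x j"
      using pj[of j] unfolding vec_lambda_beta re_e by blast
  qed
qed

lemma L2:
  fixes l :: "real^'n::finite"
  assumes tr: "is_trace l 0 f x"
  shows "x \<in> Vz (\<chi> j. 1)"
proof -
  obtain c where "\<forall>j. trA x j = c \<and> trB x j = 0 \<and> trC x j = c \<and> trD x j = 0"
    using tr unfolding is_trace_def by auto
  then show ?thesis unfolding Vz_def by simp
qed


lemma fiber_sub: "trace_fiber z \<subseteq> Vz z"
proof
  fix x assume "x \<in> trace_fiber z"
  then obtain l k f where l: "\<forall>j. l$j > (0::real)" and k: "k \<ge> 0" and ef: "eig_fun l (k\<^sup>2) f"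
    and z: "z = (\<chi> j. exp (\<i> * of_real (k * l$j)))" and tr: "is_trace l k f x"
    unfolding trace_fiber_def trace_space_def by blast
  show "x \<in> Vz z"
  proof (cases "k > 0")
    case True
    then show ?thesis using L1[OF True l ef tr] z by simp
  next
    case False
    then have "k = 0" using k by simp
    then show ?thesis using L2[of l f x] tr z by simp
  qed
qed

lemma fiber:
  assumes "z \<in> Sigma_set"
  shows "(\<forall>j. cmod (z$j) = 1) \<and> trace_fiber z = Vz z"
proof -
  obtain x0 l0 k0 f0 where l0: "\<forall>j. l0$j > (0::real)" and k0: "k0 \<ge> 0" and ev: "is_eigenvalue l0 (k0\<^sup>2)"
    and z: "z = (\<chi> j. exp (\<i> * of_real (k0 * l0$j)))"
    using assms unfolding Sigma_set_def trace_space_def by force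
  have unit: "\<forall>j. cmod (z$j) = 1" unfolding z using cm_e by (simp del: of_real_mult)
  have "Vz z \<subseteq> trace_fiber z"
  proof
    fix x assume x: "x \<in> Vz z"
    show "x \<in> trace_fiber z"
    proof (cases "k0 > 0")
      case True
      have x': "x \<in> Vz (\<chi> j. exp (\<i> * of_real (k0 * l0$j)))" using x z by simp
      show ?thesis unfolding trace_fiber_def trace_space_def
        using l0 k0 ev L3[OF True x'] z by blast
    next
      case False
      then have "k0 = 0" using k0 by simp
      then have z1: "z = (\<chi> j. 1)" using z by simp
      define l1 :: "real^'a" where "l1 = (\<chi> j. 2 * pi)"
      have zz: "(\<chi> j. exp (\<i> * of_real (1 * l1$j))) = (\<chi> j. (1::complex))"
        unfolding l1_def by (simp add: vec_eq_iff complex_eq_iff del: of_real_mult)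
      have l1: "\<forall>j. l1$j > 0" unfolding l1_def by simp
      have x1: "x \<in> Vz (\<chi> j. exp (\<i> * of_real (1 * l1$j)))" using x z1 zz by simp
      define y :: "complex^('a \<times> 4)" where "y = mkx (\<lambda>_. 1) (\<lambda>_. 0) (\<lambda>_. 1) (\<lambda>_. 0)"
      have y1: "y \<in> Vz (\<chi> j. exp (\<i> * of_real (1 * l1$j)))" unfolding zz y_def Vz_def by simp
      have ev1: "is_eigenvalue l1 (1\<^sup>2)"
        unfolding is_eigenvalue_def
      proof (rule exI, rule conjI)
        show "eig_fun l1 (1\<^sup>2) (\<lambda>j t. trA y j * of_real (cos (1 * t)) + trB y j * of_real (sin (1 * t)))"
          using L3(1)[OF _ y1] by simp
        obtain j0 :: 'a where True by simp
        show "\<exists>j. \<exists>t\<in>{0..l1 $ j}. trA y j * of_real (cos (1 * t)) + trB y j * of_real (sin (1 * t)) \<noteq> 0"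
          using l1 by (intro exI[of _ j0] bexI[of _ 0]) (auto simp: y_def less_imp_le)
      qed
      show ?thesis unfolding trace_fiber_def trace_space_def
        using l1 ev1 L3[OF _ x1] z1 zz
        by (intro CollectI exI[of _ z] exI[of _ x]) (auto intro!: exI[of _ l1] exI[of _ "1::real"])
    qed
  qed
  with fiber_sub[of z] unit show ?thesis by blast
qed


lemma key:
  fixes u w :: "'n::finite \<Rightarrow> complex"
  assumes nz: "\<And>j. u j \<noteq> 0 \<or> w j \<noteq> 0"
  shows "(\<exists>a b. (a \<noteq> 0 \<or> (\<exists>j. b j \<noteq> 0)) \<and> (\<forall>j. u j * a = \<i> * w j * b j) \<and> sum b UNIV = 0)
     \<longleftrightarrow> (\<Sum>j\<in>UNIV. u j * (\<Prod>i\<in>UNIV - {j}. w i)) = 0"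
    (is "?L \<longleftrightarrow> ?P = 0")
proof
  have two: "?P = 0" if j0: "w j0 = 0" and j1: "w j1 = 0" "j1 \<noteq> j0" for j0 j1
  proof -
    have "(\<Prod>i\<in>UNIV - {j}. w i) = 0" for j
    proof (cases "j = j0")
      case True then show ?thesis using j1 by (intro prod_zero) auto
    next
      case False then show ?thesis using j0 by (intro prod_zero) auto
    qed
    then show ?thesis by (simp del: prod_zero_iff)
  qed
  assume ?L
  then obtain a b where nzab: "a \<noteq> 0 \<or> (\<exists>j. b j \<noteq> 0)" and e: "\<forall>j. u j * a = \<i> * w j * b j"
    and sb: "sum b UNIV = 0" by blast
  have aP: "a * ?P = \<i> * (\<Prod>i\<in>UNIV. w i) * sum b UNIV"
  proof -
    have "a * ?P = (\<Sum>j\<in>UNIV. (u j * a) * (\<Prod>i\<in>UNIV - {j}. w i))"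
      by (simp add: sum_distrib_left algebra_simps)
    also have "\<dots> = (\<Sum>j\<in>UNIV. \<i> * b j * (w j * (\<Prod>i\<in>UNIV - {j}. w i)))"
      using e by (simp add: algebra_simps)
    also have "\<dots> = (\<Sum>j\<in>UNIV. \<i> * b j * (\<Prod>i\<in>UNIV. w i))"
      by (simp add: prod.remove[symmetric])
    also have "\<dots> = \<i> * (\<Prod>i\<in>UNIV. w i) * sum b UNIV"
      by (subst sum_distrib_left) (simp add: ac_simps)
    finally show ?thesis .
  qed
  show "?P = 0"
  proof (cases "a = 0")
    case False then show ?thesis using aP sb by simp
  next
    case True
    then obtain j0 where b0: "b j0 \<noteq> 0" using nzab by blast
    have wb: "w j * b j = 0" for j using e True by simp
    have w0: "w j0 = 0" using wb[of j0] b0 by simp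
    have "\<exists>j1. j1 \<noteq> j0 \<and> b j1 \<noteq> 0"
    proof (rule ccontr)
      assume "\<not> ?thesis" then have bz: "\<forall>j. j \<noteq> j0 \<longrightarrow> b j = 0" by blast
      have "sum b UNIV = b j0 + sum b (UNIV - {j0})" by (subst sum.remove[of UNIV j0]) auto
      also have "sum b (UNIV - {j0}) = 0" using bz by (intro sum.neutral) auto
      finally show False using sb b0 by simp
    qed
    then obtain j1 where j1: "j1 \<noteq> j0" "b j1 \<noteq> 0" by blast
    then have "w j1 = 0" using wb[of j1] by simp
    then show ?thesis using two w0 j1 by blast
  qed
next
  assume P0: "?P = 0"
  show ?L
  proof (cases "\<exists>j0. w j0 = 0")
    case True
    then obtain j0 where w0: "w j0 = 0" by blast
    have u0: "u j0 \<noteq> 0" using nz w0 by blast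
    have "?P = u j0 * (\<Prod>i\<in>UNIV - {j0}. w i) + (\<Sum>j\<in>UNIV - {j0}. u j * (\<Prod>i\<in>UNIV - {j}. w i))"
      by (subst sum.remove[of UNIV j0]) auto
    moreover have "(\<Sum>j\<in>UNIV - {j0}. u j * (\<Prod>i\<in>UNIV - {j}. w i)) = 0"
    proof (intro sum.neutral ballI)
      fix j assume "j \<in> UNIV - {j0}"
      then have "(\<Prod>i\<in>UNIV - {j}. w i) = 0" using w0 by (intro prod_zero) auto
      then show "u j * (\<Prod>i\<in>UNIV - {j}. w i) = 0" by simp
    qed
    ultimately have "?P = u j0 * (\<Prod>i\<in>UNIV - {j0}. w i)" by simp
    then have "(\<Prod>i\<in>UNIV - {j0}. w i) = 0" using P0 u0 by simp
    then obtain j1 where j1: "j1 \<noteq> j0" "w j1 = 0" using prod_zero_iff[of "UNIV - {j0}" w] by auto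
    define b where "b = (\<lambda>j. (if j = j0 then 1 else 0) - (if j = j1 then (1::complex) else 0))"
    show ?L
    proof (intro exI[of _ 0] exI[of _ b] conjI)
      show "0 \<noteq> (0::complex) \<or> (\<exists>j. b j \<noteq> 0)" using j1 by (auto simp: b_def intro!: exI[of _ j0])
      show "\<forall>j. u j * 0 = \<i> * w j * b j" using w0 j1 by (auto simp: b_def)
      show "sum b UNIV = 0" by (simp add: b_def sum_subtractf)
    qed
  next
    case False
    then have wnz: "\<And>j. w j \<noteq> 0" by blast
    have pr: "(\<Prod>i\<in>UNIV - {j}. w i) = (\<Prod>i\<in>UNIV. w i) / w j" for j
      using prod.remove[of UNIV j w] wnz[of j] by (simp add: field_simps)
    have "?P = (\<Sum>j\<in>UNIV. (\<Prod>i\<in>UNIV. w i) * (u j / w j))"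
      unfolding pr by (simp add: algebra_simps)
    also have "\<dots> = (\<Prod>i\<in>UNIV. w i) * (\<Sum>j\<in>UNIV. u j / w j)"
      by (simp add: sum_distrib_left)
    finally have "(\<Prod>i\<in>UNIV. w i) * (\<Sum>j\<in>UNIV. u j / w j) = 0" using P0 by simp
    moreover have "(\<Prod>i\<in>UNIV. w i) \<noteq> 0" using wnz by simp
    ultimately have su: "(\<Sum>j\<in>UNIV. u j / w j) = 0" by simp
    define b where "b = (\<lambda>j. u j / w j / \<i>)"
    show ?L
    proof (intro exI[of _ 1] exI[of _ b] conjI)
      show "1 \<noteq> (0::complex) \<or> (\<exists>j. b j \<noteq> 0)" by simp
      show "\<forall>j. u j * 1 = \<i> * w j * b j" using wnz by (simp add: b_def field_simps)
      have "sum b UNIV = (\<Sum>j\<in>UNIV. u j / w j) / \<i>" unfolding b_def by (rule sum_divide_distrib[symmetric])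
      then show "sum b UNIV = 0" using su by simp
    qed
  qed
qed

lemma symeq:
  fixes z a b :: complex
  assumes "cmod z = 1"
  shows "(a = of_real (Re z) * a + of_real (Im z) * b \<and> b = of_real (Im z) * a - of_real (Re z) * b)
     \<longleftrightarrow> (z - 1) * a = \<i> * (z + 1) * b"
proof -
  define c where "c = Re z"
  define s where "s = Im z"
  have zc: "z = of_real c + \<i> * of_real s" by (simp add: c_def s_def complex_eq_iff)
  have cs: "c\<^sup>2 + s\<^sup>2 = 1" using assms cmod_power2[of z] by (simp add: c_def s_def)
  define F where "F = (of_real c - 1) * a + of_real s * b"
  define G where "G = of_real s * a - (of_real c + 1) * b"
  have lhs: "(a = of_real c * a + of_real s * b \<and> b = of_real s * a - of_real c * b) \<longleftrightarrow> F = 0 \<and> G = 0"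
  proof -
    have "F = (of_real c * a + of_real s * b) - a" "G = (of_real s * a - of_real c * b) - b"
      by (simp_all add: F_def G_def algebra_simps)
    then show ?thesis by auto
  qed
  have rhs: "(z - 1) * a - \<i> * (z + 1) * b = F + \<i> * G"
    by (simp add: zc F_def G_def algebra_simps)
  have rel: "(of_real c + 1) * F + of_real s * G = 0"
  proof -
    have "(of_real c + 1) * F + of_real s * G = of_real (c\<^sup>2 + s\<^sup>2 - 1) * a"
      by (simp add: F_def G_def algebra_simps power2_eq_square)
    then show ?thesis using cs by simp
  qed
  have "F = 0 \<and> G = 0 \<longleftrightarrow> F + \<i> * G = 0"
  proof
    assume h: "F + \<i> * G = 0"
    then have Fi: "F = - \<i> * G" by (simp add: eq_neg_iff_add_eq_0)
    have "(of_real s - \<i> * (of_real c + 1)) * G = 0"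
      using rel unfolding Fi by (simp add: algebra_simps)
    moreover have "G = 0" if "of_real s - \<i> * (of_real c + 1) = 0"
    proof -
      from that have "s = 0" "c = -1" by (simp_all add: complex_eq_iff)
      then show ?thesis by (simp add: G_def)
    qed
    ultimately have "G = 0" by auto
    then show "F = 0 \<and> G = 0" using Fi by simp
  qed simp
  moreover have "(z - 1) * a = \<i> * (z + 1) * b \<longleftrightarrow> F + \<i> * G = 0"
    unfolding rhs[symmetric] by simp
  ultimately show ?thesis using lhs[unfolded c_def s_def] by blast
qed

lemma asymeq:
  fixes z a b :: complex
  assumes "cmod z = 1"
  shows "(- a = of_real (Re z) * a + of_real (Im z) * b \<and> - b = of_real (Im z) * a - of_real (Re z) * b)
     \<longleftrightarrow> (z + 1) * a = \<i> * (z - 1) * b"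
proof -
  have "cmod (-z) = 1" using assms by simp
  note h = symeq[OF this, of a b]
  have e1: "(a = of_real (Re (-z)) * a + of_real (Im (-z)) * b) \<longleftrightarrow> (- a = of_real (Re z) * a + of_real (Im z) * b)"
    by (simp add: minus_equation_iff[of a] algebra_simps) auto
  have e2: "(b = of_real (Im (-z)) * a - of_real (Re (-z)) * b) \<longleftrightarrow> (- b = of_real (Im z) * a - of_real (Re z) * b)"
    by (simp add: minus_equation_iff[of b] algebra_simps) auto
  have e3: "((-z - 1) * a = \<i> * (-z + 1) * b) \<longleftrightarrow> ((z + 1) * a = \<i> * (z - 1) * b)"
    by (auto simp: algebra_simps)
  show ?thesis using h e1 e2 e3 by simp
qed


lemma VzD:
  assumes "x \<in> Vz z"
  shows "trA x i = trA x j" "trC x i = trC x j" "(\<Sum>j\<in>UNIV. trB x j) = 0" "(\<Sum>j\<in>UNIV. trD x j) = 0"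
    "trC x j = of_real (Re (z$j)) * trA x j + of_real (Im (z$j)) * trB x j"
    "trD x j = of_real (Im (z$j)) * trA x j - of_real (Re (z$j)) * trB x j"
  using assms unfolding Vz_def by blast+

lemma Vz_sub: "vec.subspace (Vz z)"
  unfolding vec.subspace_def
proof (intro conjI ballI allI)
  show "0 \<in> Vz z" by (simp add: Vz_def)
next
  fix c x assume x: "x \<in> Vz z"
  show "c *s x \<in> Vz z" unfolding Vz_def
  proof (intro CollectI conjI allI)
    fix i j
    show "trA (c *s x) i = trA (c *s x) j" using VzD(1)[OF x, of i j] by simp
    show "trC (c *s x) i = trC (c *s x) j" using VzD(2)[OF x, of i j] by simp
  next
    show "(\<Sum>j\<in>UNIV. trB (c *s x) j) = 0" using VzD(3)[OF x] by (simp add: sum_distrib_left[symmetric])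
    show "(\<Sum>j\<in>UNIV. trD (c *s x) j) = 0" using VzD(4)[OF x] by (simp add: sum_distrib_left[symmetric])
  next
    fix j
    show "trC (c *s x) j = of_real (Re (z$j)) * trA (c *s x) j + of_real (Im (z$j)) * trB (c *s x) j"
      using arg_cong[OF VzD(5)[OF x, of j], of "\<lambda>t. c * t"] by (simp add: algebra_simps)
    show "trD (c *s x) j = of_real (Im (z$j)) * trA (c *s x) j - of_real (Re (z$j)) * trB (c *s x) j"
      using arg_cong[OF VzD(6)[OF x, of j], of "\<lambda>t. c * t"] by (simp add: algebra_simps)
  qed
next
  fix x y assume x: "x \<in> Vz z" and y: "y \<in> Vz z"
  show "x + y \<in> Vz z" unfolding Vz_def
  proof (intro CollectI conjI allI)
    fix i j
    show "trA (x + y) i = trA (x + y) j" using VzD(1)[OF x, of i j] VzD(1)[OF y, of i j] by simp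
    show "trC (x + y) i = trC (x + y) j" using VzD(2)[OF x, of i j] VzD(2)[OF y, of i j] by simp
  next
    show "(\<Sum>j\<in>UNIV. trB (x + y) j) = 0" using VzD(3)[OF x] VzD(3)[OF y] by (simp add: sum.distrib)
    show "(\<Sum>j\<in>UNIV. trD (x + y) j) = 0" using VzD(4)[OF x] VzD(4)[OF y] by (simp add: sum.distrib)
  next
    fix j
    show "trC (x + y) j = of_real (Re (z$j)) * trA (x + y) j + of_real (Im (z$j)) * trB (x + y) j"
      using arg_cong2[where f="(+)", OF VzD(5)[OF x, of j] VzD(5)[OF y, of j]] by (simp add: algebra_simps)
    show "trD (x + y) j = of_real (Im (z$j)) * trA (x + y) j - of_real (Re (z$j)) * trB (x + y) j"
      using arg_cong2[where f="(+)", OF VzD(6)[OF x, of j] VzD(6)[OF y, of j]] by (simp add: algebra_simps)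
  qed
qed

lemma sub_restrict:
  assumes "vec.subspace S" "P 0" "\<And>x y. P x \<Longrightarrow> P y \<Longrightarrow> P (x + y)" "\<And>x c. P x \<Longrightarrow> P (c *s x)"
  shows "vec.subspace {x\<in>S. P x}"
  using assms unfolding vec.subspace_def by auto

lemma Vz_inv:
  assumes u: "cmod (z$j) = 1" and x: "x \<in> Vz z"
  shows "trA x j = of_real (Re (z$j)) * trC x j + of_real (Im (z$j)) * trD x j
    \<and> trB x j = of_real (Im (z$j)) * trC x j - of_real (Re (z$j)) * trD x j"
proof -
  define c where "c = Re (z$j)"
  define s where "s = Im (z$j)"
  have cs0: "c\<^sup>2 + s\<^sup>2 = 1" using u cmod_power2[of "z$j"] unfolding c_def s_def by simp
  have cs: "complex_of_real c ^ 2 + complex_of_real s ^ 2 = 1"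
    by (simp only: of_real_power[symmetric] of_real_add[symmetric] cs0 of_real_1)
  have hC: "trC x j = of_real c * trA x j + of_real s * trB x j"
    and hD: "trD x j = of_real s * trA x j - of_real c * trB x j"
    unfolding c_def s_def by (rule VzD(5)[OF x], rule VzD(6)[OF x])
  have "of_real c * trC x j + of_real s * trD x j = (complex_of_real c ^ 2 + complex_of_real s ^ 2) * trA x j"
    "of_real s * trC x j - of_real c * trD x j = (complex_of_real c ^ 2 + complex_of_real s ^ 2) * trB x j"
    unfolding hC hD by (simp_all add: algebra_simps power2_eq_square)
  then show ?thesis unfolding c_def[symmetric] s_def[symmetric] using cs by simp
qed

lemma half: "(p + q) / 2 + (p - q) / 2 = (p::complex)" "(p + q) / 2 + (q - p) / 2 = (q::complex)"
  by (simp_all add: field_simps)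

lemma decomp:
  assumes u: "\<forall>j. cmod (z$j) = 1" and x: "x \<in> Vz z"
  shows "mkx (\<lambda>j. (trA x j + trC x j) / 2) (\<lambda>j. (trB x j + trD x j) / 2) (\<lambda>j. (trA x j + trC x j) / 2) (\<lambda>j. (trB x j + trD x j) / 2) \<in> Vz z"
   and "mkx (\<lambda>j. (trA x j - trC x j) / 2) (\<lambda>j. (trB x j - trD x j) / 2) (\<lambda>j. (trC x j - trA x j) / 2) (\<lambda>j. (trD x j - trB x j) / 2) \<in> Vz z"
   and "x = mkx (\<lambda>j. (trA x j + trC x j) / 2) (\<lambda>j. (trB x j + trD x j) / 2) (\<lambda>j. (trA x j + trC x j) / 2) (\<lambda>j. (trB x j + trD x j) / 2)
     + mkx (\<lambda>j. (trA x j - trC x j) / 2) (\<lambda>j. (trB x j - trD x j) / 2) (\<lambda>j. (trC x j - trA x j) / 2) (\<lambda>j. (trD x j - trB x j) / 2)"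
proof -
  have hA: "\<And>i j. trA x i = trA x j" and hC: "\<And>i j. trC x i = trC x j"
    and hB: "(\<Sum>j\<in>UNIV. trB x j) = 0" and hD: "(\<Sum>j\<in>UNIV. trD x j) = 0"
    and hCj: "\<And>j. trC x j = of_real (Re (z$j)) * trA x j + of_real (Im (z$j)) * trB x j"
    and hDj: "\<And>j. trD x j = of_real (Im (z$j)) * trA x j - of_real (Re (z$j)) * trB x j"
    using x unfolding Vz_def by auto
  have iA: "\<And>j. trA x j = of_real (Re (z$j)) * trC x j + of_real (Im (z$j)) * trD x j"
    and iB: "\<And>j. trB x j = of_real (Im (z$j)) * trC x j - of_real (Re (z$j)) * trD x j"
    using Vz_inv[OF _ x] u by auto
  have sBD: "(\<Sum>j\<in>UNIV. (trB x j + trD x j) / 2) = 0" "(\<Sum>j\<in>UNIV. (trB x j - trD x j) / 2) = 0"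
    "(\<Sum>j\<in>UNIV. (trD x j - trB x j) / 2) = 0"
    using hB hD by (simp_all add: sum_divide_distrib[symmetric] sum.distrib sum_subtractf)
  show "mkx (\<lambda>j. (trA x j + trC x j) / 2) (\<lambda>j. (trB x j + trD x j) / 2) (\<lambda>j. (trA x j + trC x j) / 2) (\<lambda>j. (trB x j + trD x j) / 2) \<in> Vz z"
    unfolding Vz_def
  proof (intro CollectI conjI allI)
    fix i j
    show "trA (mkx (\<lambda>j. (trA x j + trC x j) / 2) (\<lambda>j. (trB x j + trD x j) / 2) (\<lambda>j. (trA x j + trC x j) / 2) (\<lambda>j. (trB x j + trD x j) / 2)) i =
       trA (mkx (\<lambda>j. (trA x j + trC x j) / 2) (\<lambda>j. (trB x j + trD x j) / 2) (\<lambda>j. (trA x j + trC x j) / 2) (\<lambda>j. (trB x j + trD x j) / 2)) j"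
      using hA[of i j] hC[of i j] by simp
    show "trC (mkx (\<lambda>j. (trA x j + trC x j) / 2) (\<lambda>j. (trB x j + trD x j) / 2) (\<lambda>j. (trA x j + trC x j) / 2) (\<lambda>j. (trB x j + trD x j) / 2)) i =
       trC (mkx (\<lambda>j. (trA x j + trC x j) / 2) (\<lambda>j. (trB x j + trD x j) / 2) (\<lambda>j. (trA x j + trC x j) / 2) (\<lambda>j. (trB x j + trD x j) / 2)) j"
      using hA[of i j] hC[of i j] by simp
  next
    fix j
    have e1: "trA x j + trC x j = of_real (Re (z$j)) * (trA x j + trC x j) + of_real (Im (z$j)) * (trB x j + trD x j)"
      by (rule trans[OF arg_cong2[where f="(+)", OF iA[of j] hCj[of j]]]) (simp add: algebra_simps)
    have e2: "trB x j + trD x j = of_real (Im (z$j)) * (trA x j + trC x j) - of_real (Re (z$j)) * (trB x j + trD x j)"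
      by (rule trans[OF arg_cong2[where f="(+)", OF iB[of j] hDj[of j]]]) (simp add: algebra_simps)
    show "trC (mkx (\<lambda>j. (trA x j + trC x j) / 2) (\<lambda>j. (trB x j + trD x j) / 2) (\<lambda>j. (trA x j + trC x j) / 2) (\<lambda>j. (trB x j + trD x j) / 2)) j =
      of_real (Re (z$j)) * trA (mkx (\<lambda>j. (trA x j + trC x j) / 2) (\<lambda>j. (trB x j + trD x j) / 2) (\<lambda>j. (trA x j + trC x j) / 2) (\<lambda>j. (trB x j + trD x j) / 2)) j
      + of_real (Im (z$j)) * trB (mkx (\<lambda>j. (trA x j + trC x j) / 2) (\<lambda>j. (trB x j + trD x j) / 2) (\<lambda>j. (trA x j + trC x j) / 2) (\<lambda>j. (trB x j + trD x j) / 2)) j"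
      unfolding tr_mkx by (rule trans[OF arg_cong[OF e1, of "\<lambda>t. t / 2"]]) (simp add: field_simps)
    show "trD (mkx (\<lambda>j. (trA x j + trC x j) / 2) (\<lambda>j. (trB x j + trD x j) / 2) (\<lambda>j. (trA x j + trC x j) / 2) (\<lambda>j. (trB x j + trD x j) / 2)) j =
      of_real (Im (z$j)) * trA (mkx (\<lambda>j. (trA x j + trC x j) / 2) (\<lambda>j. (trB x j + trD x j) / 2) (\<lambda>j. (trA x j + trC x j) / 2) (\<lambda>j. (trB x j + trD x j) / 2)) j
      - of_real (Re (z$j)) * trB (mkx (\<lambda>j. (trA x j + trC x j) / 2) (\<lambda>j. (trB x j + trD x j) / 2) (\<lambda>j. (trA x j + trC x j) / 2) (\<lambda>j. (trB x j + trD x j) / 2)) j"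
      unfolding tr_mkx by (rule trans[OF arg_cong[OF e2, of "\<lambda>t. t / 2"]]) (simp add: field_simps)
  qed (use sBD in simp_all)
  show "mkx (\<lambda>j. (trA x j - trC x j) / 2) (\<lambda>j. (trB x j - trD x j) / 2) (\<lambda>j. (trC x j - trA x j) / 2) (\<lambda>j. (trD x j - trB x j) / 2) \<in> Vz z"
    unfolding Vz_def
  proof (intro CollectI conjI allI)
    fix i j
    show "trA (mkx (\<lambda>j. (trA x j - trC x j) / 2) (\<lambda>j. (trB x j - trD x j) / 2) (\<lambda>j. (trC x j - trA x j) / 2) (\<lambda>j. (trD x j - trB x j) / 2)) i =
       trA (mkx (\<lambda>j. (trA x j - trC x j) / 2) (\<lambda>j. (trB x j - trD x j) / 2) (\<lambda>j. (trC x j - trA x j) / 2) (\<lambda>j. (trD x j - trB x j) / 2)) j"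
      using hA[of i j] hC[of i j] by simp
    show "trC (mkx (\<lambda>j. (trA x j - trC x j) / 2) (\<lambda>j. (trB x j - trD x j) / 2) (\<lambda>j. (trC x j - trA x j) / 2) (\<lambda>j. (trD x j - trB x j) / 2)) i =
       trC (mkx (\<lambda>j. (trA x j - trC x j) / 2) (\<lambda>j. (trB x j - trD x j) / 2) (\<lambda>j. (trC x j - trA x j) / 2) (\<lambda>j. (trD x j - trB x j) / 2)) j"
      using hA[of i j] hC[of i j] by simp
  next
    fix j
    have e1: "trC x j - trA x j = of_real (Re (z$j)) * (trA x j - trC x j) + of_real (Im (z$j)) * (trB x j - trD x j)"
      by (rule trans[OF arg_cong2[where f="(-)", OF hCj[of j] iA[of j]]]) (simp add: algebra_simps)
    have e2: "trD x j - trB x j = of_real (Im (z$j)) * (trA x j - trC x j) - of_real (Re (z$j)) * (trB x j - trD x j)"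
      by (rule trans[OF arg_cong2[where f="(-)", OF hDj[of j] iB[of j]]]) (simp add: algebra_simps)
    show "trC (mkx (\<lambda>j. (trA x j - trC x j) / 2) (\<lambda>j. (trB x j - trD x j) / 2) (\<lambda>j. (trC x j - trA x j) / 2) (\<lambda>j. (trD x j - trB x j) / 2)) j =
      of_real (Re (z$j)) * trA (mkx (\<lambda>j. (trA x j - trC x j) / 2) (\<lambda>j. (trB x j - trD x j) / 2) (\<lambda>j. (trC x j - trA x j) / 2) (\<lambda>j. (trD x j - trB x j) / 2)) j
      + of_real (Im (z$j)) * trB (mkx (\<lambda>j. (trA x j - trC x j) / 2) (\<lambda>j. (trB x j - trD x j) / 2) (\<lambda>j. (trC x j - trA x j) / 2) (\<lambda>j. (trD x j - trB x j) / 2)) j"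
      unfolding tr_mkx by (rule trans[OF arg_cong[OF e1, of "\<lambda>t. t / 2"]]) (simp add: field_simps)
    show "trD (mkx (\<lambda>j. (trA x j - trC x j) / 2) (\<lambda>j. (trB x j - trD x j) / 2) (\<lambda>j. (trC x j - trA x j) / 2) (\<lambda>j. (trD x j - trB x j) / 2)) j =
      of_real (Im (z$j)) * trA (mkx (\<lambda>j. (trA x j - trC x j) / 2) (\<lambda>j. (trB x j - trD x j) / 2) (\<lambda>j. (trC x j - trA x j) / 2) (\<lambda>j. (trD x j - trB x j) / 2)) j
      - of_real (Re (z$j)) * trB (mkx (\<lambda>j. (trA x j - trC x j) / 2) (\<lambda>j. (trB x j - trD x j) / 2) (\<lambda>j. (trC x j - trA x j) / 2) (\<lambda>j. (trD x j - trB x j) / 2)) j"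
      unfolding tr_mkx by (rule trans[OF arg_cong[OF e2, of "\<lambda>t. t / 2"]]) (simp add: field_simps)
  qed (use sBD in simp_all)
  show "x = mkx (\<lambda>j. (trA x j + trC x j) / 2) (\<lambda>j. (trB x j + trD x j) / 2) (\<lambda>j. (trA x j + trC x j) / 2) (\<lambda>j. (trB x j + trD x j) / 2)
     + mkx (\<lambda>j. (trA x j - trC x j) / 2) (\<lambda>j. (trB x j - trD x j) / 2) (\<lambda>j. (trC x j - trA x j) / 2) (\<lambda>j. (trD x j - trB x j) / 2)"
    unfolding tr_ext by (simp add: half)
qed


lemma decomp2:
  assumes u: "\<forall>j. cmod (z$j) = 1" and x: "x \<in> Vz z"
  shows "\<exists>s a. x = s + a \<and> s \<in> Vz z \<and> (\<forall>j. trA s j = trC s j \<and> trB s j = trD s j)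
     \<and> a \<in> Vz z \<and> (\<forall>j. trA a j = - trC a j \<and> trB a j = - trD a j)"
  apply (rule exI, rule exI, rule conjI, rule decomp(3)[OF u x])
  apply (intro conjI allI)
  apply (rule decomp(1)[OF u x])
  apply (simp only: tr_mkx; rule refl)
  apply (simp only: tr_mkx; rule refl)
  apply (rule decomp(2)[OF u x])
  apply (simp only: tr_mkx minus_divide_left minus_diff_eq; rule refl)
  apply (simp only: tr_mkx minus_divide_left minus_diff_eq; rule refl)
  done

lemma nz1: "(w::complex) - 1 \<noteq> 0 \<or> w + 1 \<noteq> 0" "(w::complex) + 1 \<noteq> 0 \<or> w - 1 \<noteq> 0"
  by (cases "w = 1"; simp)+

theorem mainTheorem12:
  fixes z :: "complex^'n::finite"
  assumes "z \<in> Sigma_set"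
  shows "vec.subspace (trace_fiber_s z) \<and> vec.subspace (trace_fiber_as z)
    \<and> trace_fiber_s z \<inter> trace_fiber_as z = {0}
    \<and> trace_fiber z = {s + a | s a. s \<in> trace_fiber_s z \<and> a \<in> trace_fiber_as z}
    \<and> (trace_fiber_s z \<noteq> {0} \<longleftrightarrow> P_s z = 0)
    \<and> (trace_fiber_as z \<noteq> {0} \<longleftrightarrow> P_as z = 0)"
proof -
  have U: "\<And>j. cmod (z$j) = 1" and F: "trace_fiber z = Vz z" using fiber[OF assms] by auto
  have ts: "trace_fiber_s z = {x \<in> Vz z. \<forall>j. trA x j = trC x j \<and> trB x j = trD x j}"
    unfolding trace_fiber_s_def F ..
  have tas: "trace_fiber_as z = {x \<in> Vz z. \<forall>j. trA x j = - trC x j \<and> trB x j = - trD x j}"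
    unfolding trace_fiber_as_def F ..
  have V0: "0 \<in> Vz z" using vec.subspace_0[OF Vz_sub] .
  have s1: "vec.subspace (trace_fiber_s z)" unfolding ts by (rule sub_restrict[OF Vz_sub]) auto
  have s2: "vec.subspace (trace_fiber_as z)" unfolding tas by (rule sub_restrict[OF Vz_sub]) auto
  have int: "trace_fiber_s z \<inter> trace_fiber_as z = {0}"
  proof
    show "trace_fiber_s z \<inter> trace_fiber_as z \<subseteq> {0}"
    proof
      fix x assume "x \<in> trace_fiber_s z \<inter> trace_fiber_as z"
      then have h: "\<forall>j. trA x j = trC x j \<and> trB x j = trD x j \<and> trA x j = - trC x j \<and> trB x j = - trD x j"
        unfolding ts tas by blast
      have "x = 0" unfolding tr_ext
      proof
        fix j
        have hj: "trA x j = trC x j" "trB x j = trD x j" "trA x j = - trC x j" "trB x j = - trD x j"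
          using h by blast+
        have "trC x j = - trC x j" using hj(1) hj(3) by (rule subst)
        then have C0: "trC x j = 0" by (simp add: eq_neg_iff_add_eq_0)
        have "trD x j = - trD x j" using hj(2) hj(4) by (rule subst)
        then have D0: "trD x j = 0" by (simp add: eq_neg_iff_add_eq_0)
        show "trA x j = trA 0 j \<and> trB x j = trB 0 j \<and> trC x j = trC 0 j \<and> trD x j = trD 0 j"
          unfolding hj(1) hj(2) C0 D0 tr_ops by simp
      qed
      then show "x \<in> {0}" by simp
    qed
    show "{0} \<subseteq> trace_fiber_s z \<inter> trace_fiber_as z" unfolding ts tas using V0 by simp
  qed
  have dec: "trace_fiber z = {s + a | s a. s \<in> trace_fiber_s z \<and> a \<in> trace_fiber_as z}"
  proof
    show "trace_fiber z \<subseteq> {s + a | s a. s \<in> trace_fiber_s z \<and> a \<in> trace_fiber_as z}"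
    proof
      fix x assume "x \<in> trace_fiber z"
      then have x: "x \<in> Vz z" unfolding F .
      have U': "\<forall>j. cmod (z$j) = 1" using U by simp
      obtain s a where "x = s + a" "s \<in> Vz z" "\<forall>j. trA s j = trC s j \<and> trB s j = trD s j"
        "a \<in> Vz z" "\<forall>j. trA a j = - trC a j \<and> trB a j = - trD a j"
        using decomp2[OF U' x] by blast
      then show "x \<in> {s + a | s a. s \<in> trace_fiber_s z \<and> a \<in> trace_fiber_as z}"
        unfolding ts tas by blast
    qed
    show "{s + a | s a. s \<in> trace_fiber_s z \<and> a \<in> trace_fiber_as z} \<subseteq> trace_fiber z"
    proof
      fix y assume "y \<in> {s + a | s a. s \<in> trace_fiber_s z \<and> a \<in> trace_fiber_as z}"
      then obtain s a where y: "y = s + a" and sa: "s \<in> trace_fiber_s z" "a \<in> trace_fiber_as z" by blast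
      have "s \<in> Vz z" "a \<in> Vz z" using sa unfolding ts tas by blast+
      then have "s + a \<in> Vz z" by (rule vec.subspace_add[OF Vz_sub])
      then show "y \<in> trace_fiber z" unfolding F y .
    qed
  qed
  have ns: "trace_fiber_s z \<noteq> {0} \<longleftrightarrow> P_s z = 0"
  proof -
    have z0: "0 \<in> trace_fiber_s z" unfolding ts using V0 by simp
    have "trace_fiber_s z \<noteq> {0} \<longleftrightarrow> (\<exists>x\<in>trace_fiber_s z. x \<noteq> 0)" using z0 by auto
    also have "\<dots> \<longleftrightarrow> (\<exists>a b. (a \<noteq> 0 \<or> (\<exists>j. b j \<noteq> 0)) \<and> (\<forall>j. (z$j - 1) * a = \<i> * (z$j + 1) * b j) \<and> sum b UNIV = 0)"
    proof
      assume "\<exists>x\<in>trace_fiber_s z. x \<noteq> 0"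
      then obtain x where x: "x \<in> Vz z" and sy: "\<forall>j. trA x j = trC x j \<and> trB x j = trD x j" and nx: "x \<noteq> 0"
        unfolding ts by blast
      define a where "a = trA x undefined"
      have Aj: "trA x j = a" for j unfolding a_def by (rule VzD(1)[OF x])
      show "\<exists>a b. (a \<noteq> 0 \<or> (\<exists>j. b j \<noteq> 0)) \<and> (\<forall>j. (z$j - 1) * a = \<i> * (z$j + 1) * b j) \<and> sum b UNIV = 0"
      proof (intro exI[of _ a] exI[of _ "trB x"] conjI allI)
        show "a \<noteq> 0 \<or> (\<exists>j. trB x j \<noteq> 0)"
        proof (rule ccontr)
          assume "\<not> (a \<noteq> 0 \<or> (\<exists>j. trB x j \<noteq> 0))"
          then have "a = 0" "\<And>j. trB x j = 0" by auto
          then have "x = 0" unfolding tr_ext using sy Aj by simp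
          with nx show False ..
        qed
        fix j
        have "a = of_real (Re (z$j)) * a + of_real (Im (z$j)) * trB x j \<and>
              trB x j = of_real (Im (z$j)) * a - of_real (Re (z$j)) * trB x j"
        proof -
          have C': "trC x j = a" using sy Aj by metis
          have D': "trD x j = trB x j" using sy by metis
          show ?thesis using VzD(5)[OF x, of j, unfolded C' Aj] VzD(6)[OF x, of j, unfolded D' Aj] by blast
        qed
        then show "(z$j - 1) * a = \<i> * (z$j + 1) * trB x j" using symeq[OF U[of j]] by blast
      next
        show "sum (trB x) UNIV = 0" using VzD(3)[OF x] by simp
      qed
    next
      assume "\<exists>a b. (a \<noteq> 0 \<or> (\<exists>j. b j \<noteq> 0)) \<and> (\<forall>j. (z$j - 1) * a = \<i> * (z$j + 1) * b j) \<and> sum b UNIV = 0"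
      then obtain a b where nab: "a \<noteq> 0 \<or> (\<exists>j. b j \<noteq> 0)" and e: "\<And>j. (z$j - 1) * a = \<i> * (z$j + 1) * b j"
        and sb: "sum b UNIV = 0" by blast
      have e': "a = of_real (Re (z$j)) * a + of_real (Im (z$j)) * b j \<and>
              b j = of_real (Im (z$j)) * a - of_real (Re (z$j)) * b j" for j
        using symeq[OF U[of j]] e[of j] by blast
      define x where "x = mkx (\<lambda>_. a) b (\<lambda>_. a) b"
      have "x \<in> Vz z" unfolding Vz_def x_def
      proof (intro CollectI conjI allI)
        fix j
        show "trC (mkx (\<lambda>_. a) b (\<lambda>_. a) b) j = of_real (Re (z$j)) * trA (mkx (\<lambda>_. a) b (\<lambda>_. a) b) j
          + of_real (Im (z$j)) * trB (mkx (\<lambda>_. a) b (\<lambda>_. a) b) j"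
          unfolding tr_mkx by (rule conjunct1[OF e'[of j]])
        show "trD (mkx (\<lambda>_. a) b (\<lambda>_. a) b) j = of_real (Im (z$j)) * trA (mkx (\<lambda>_. a) b (\<lambda>_. a) b) j
          - of_real (Re (z$j)) * trB (mkx (\<lambda>_. a) b (\<lambda>_. a) b) j"
          unfolding tr_mkx by (rule conjunct2[OF e'[of j]])
      qed (simp_all only: tr_mkx tr_mkx_fun sb refl)
      moreover have "x \<noteq> 0" using nab unfolding x_def tr_ext by auto
      ultimately show "\<exists>x\<in>trace_fiber_s z. x \<noteq> 0" unfolding ts x_def by auto
    qed
    also have "\<dots> \<longleftrightarrow> P_s z = 0"
      unfolding P_s_def by (rule key[of "\<lambda>j. z$j - 1" "\<lambda>j. z$j + 1"]) (rule nz1)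
    finally show ?thesis .
  qed
  have nas: "trace_fiber_as z \<noteq> {0} \<longleftrightarrow> P_as z = 0"
  proof -
    have z0: "0 \<in> trace_fiber_as z" unfolding tas using V0 by simp
    have "trace_fiber_as z \<noteq> {0} \<longleftrightarrow> (\<exists>x\<in>trace_fiber_as z. x \<noteq> 0)" using z0 by auto
    also have "\<dots> \<longleftrightarrow> (\<exists>a b. (a \<noteq> 0 \<or> (\<exists>j. b j \<noteq> 0)) \<and> (\<forall>j. (z$j + 1) * a = \<i> * (z$j - 1) * b j) \<and> sum b UNIV = 0)"
    proof
      assume "\<exists>x\<in>trace_fiber_as z. x \<noteq> 0"
      then obtain x where x: "x \<in> Vz z" and sy: "\<forall>j. trA x j = - trC x j \<and> trB x j = - trD x j" and nx: "x \<noteq> 0"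
        unfolding tas by blast
      define a where "a = trA x undefined"
      have Aj: "trA x j = a" for j unfolding a_def by (rule VzD(1)[OF x])
      have Cj: "trC x j = - a" "trD x j = - trB x j" for j using sy Aj by (metis minus_minus)+
      show "\<exists>a b. (a \<noteq> 0 \<or> (\<exists>j. b j \<noteq> 0)) \<and> (\<forall>j. (z$j + 1) * a = \<i> * (z$j - 1) * b j) \<and> sum b UNIV = 0"
      proof (intro exI[of _ a] exI[of _ "trB x"] conjI allI)
        show "a \<noteq> 0 \<or> (\<exists>j. trB x j \<noteq> 0)"
        proof (rule ccontr)
          assume "\<not> (a \<noteq> 0 \<or> (\<exists>j. trB x j \<noteq> 0))"
          then have "a = 0" "\<And>j. trB x j = 0" by auto
          then have "x = 0" unfolding tr_ext using Cj Aj by simp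
          with nx show False ..
        qed
        fix j
        have "- a = of_real (Re (z$j)) * a + of_real (Im (z$j)) * trB x j \<and>
              - trB x j = of_real (Im (z$j)) * a - of_real (Re (z$j)) * trB x j"
          using VzD(5)[OF x, of j, unfolded Cj Aj] VzD(6)[OF x, of j, unfolded Cj Aj] by blast
        then show "(z$j + 1) * a = \<i> * (z$j - 1) * trB x j" using asymeq[OF U[of j]] by blast
      next
        show "sum (trB x) UNIV = 0" using VzD(3)[OF x] by simp
      qed
    next
      assume "\<exists>a b. (a \<noteq> 0 \<or> (\<exists>j. b j \<noteq> 0)) \<and> (\<forall>j. (z$j + 1) * a = \<i> * (z$j - 1) * b j) \<and> sum b UNIV = 0"
      then obtain a b where nab: "a \<noteq> 0 \<or> (\<exists>j. b j \<noteq> 0)" and e: "\<And>j. (z$j + 1) * a = \<i> * (z$j - 1) * b j"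
        and sb: "sum b UNIV = 0" by blast
      have e': "- a = of_real (Re (z$j)) * a + of_real (Im (z$j)) * b j \<and>
              - b j = of_real (Im (z$j)) * a - of_real (Re (z$j)) * b j" for j
        using asymeq[OF U[of j]] e[of j] by blast
      define x where "x = mkx (\<lambda>_. a) b (\<lambda>_. - a) (\<lambda>j. - b j)"
      have "x \<in> Vz z" unfolding Vz_def x_def
      proof (intro CollectI conjI allI)
        fix j
        show "trC (mkx (\<lambda>_. a) b (\<lambda>_. - a) (\<lambda>j. - b j)) j = of_real (Re (z$j)) * trA (mkx (\<lambda>_. a) b (\<lambda>_. - a) (\<lambda>j. - b j)) j
          + of_real (Im (z$j)) * trB (mkx (\<lambda>_. a) b (\<lambda>_. - a) (\<lambda>j. - b j)) j"
          unfolding tr_mkx by (rule conjunct1[OF e'[of j]])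
        show "trD (mkx (\<lambda>_. a) b (\<lambda>_. - a) (\<lambda>j. - b j)) j = of_real (Im (z$j)) * trA (mkx (\<lambda>_. a) b (\<lambda>_. - a) (\<lambda>j. - b j)) j
          - of_real (Re (z$j)) * trB (mkx (\<lambda>_. a) b (\<lambda>_. - a) (\<lambda>j. - b j)) j"
          unfolding tr_mkx by (rule conjunct2[OF e'[of j]])
      qed (simp_all only: tr_mkx tr_mkx_fun sb refl sum_negf minus_zero)
      moreover have "x \<noteq> 0" using nab unfolding x_def tr_ext by auto
      ultimately show "\<exists>x\<in>trace_fiber_as z. x \<noteq> 0" unfolding tas x_def by auto
    qed
    also have "\<dots> \<longleftrightarrow> P_as z = 0"
      unfolding P_as_def by (rule key[of "\<lambda>j. z$j + 1" "\<lambda>j. z$j - 1"]) (rule nz1)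
    finally show ?thesis .
  qed
  show ?thesis using s1 s2 int dec ns nas by (intro conjI) assumption+
qed

end
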